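(* For every $\psi\in\Psi$, $$\lambda\Big(\#\{i\le n:\beta_i\ge n\,\psi(\lfloor\log n\rfloor)\}\ge1\ \text{for infinitely many } n\Big)=0.$$
   Context: Let $\lambda$ be Lebesgue measure on $[0,1)$, $\tau(x)=2x\bmod1$, $\chi(x)=\lfloor1/x\rfloor$, $B=[1/2,1)$, $\phi(x)=\inf\{n\in\mathbb N_0:\tau^nx\in B\}+1$, $\tau_Bx=\tau^{\phi(x)}x$ (defined $\lambda$-a.e.), and $\beta_i=\chi\circ\tau_B^{\,i-1}$. $\Psi=\{u:\mathbb N\to\mathbb R_{>0}:\sum_{n\ge1}1/u(n)<\infty\}$. Logarithms are natural. *)

theory Defs
  imports "HOL-Analysis.Analysis"
begin

definition dbl :: "real \<Rightarrow> real" where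
  "dbl x = frac (2 * x)"

definition chi :: "real \<Rightarrow> int" where
  "chi x = \<lfloor>1 / x\<rfloor>"

definition B :: "real set" where
  "B = {1/2..<1}"

text \<open>First entry time plus one (only meaningful a.e., where the set is nonempty).\<close>
definition phi :: "real \<Rightarrow> nat" where
  "phi x = (LEAST n. (dbl ^^ n) x \<in> B) + 1"

definition tauB :: "real \<Rightarrow> real" where
  "tauB x = (dbl ^^ phi x) x"

definition beta :: "nat \<Rightarrow> real \<Rightarrow> int" where
  "beta i x = chi ((tauB ^^ (i - 1)) x)"

end

theory Submission
  imports Defs
begin

definition J :: "nat \<Rightarrow> real set" where "J k = {1/2^(k+1)..<1/2^k}"

lemma dbl_range: "dbl x \<in> {0..<1}"
  by (simp add: dbl_def frac_lt_1)

lemma dbl_pow_J: "x \<in> J k \<Longrightarrow> n \<le> k \<Longrightarrow> (dbl ^^ n) x = 2^n * x"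
proof (induction n)
  case 0 then show ?case by simp
next
  case (Suc n)
  have x: "1/2^(k+1) \<le> x" "x < 1/2^k" using Suc.prems by (auto simp: J_def)
  have "(2::real)^(Suc n) \<le> 2^k" using Suc.prems(2) by (intro power_increasing) auto
  moreover have "(2::real)^k * x < 1" using x(2) by (simp add: field_simps)
  ultimately have "2^(Suc n) * x < 1" using x
    by (smt (verit) mult_right_mono zero_le_divide_iff zero_le_power)
  moreover have "0 \<le> 2^(Suc n) * x" using x
    by (metis divide_nonneg_nonneg order_trans mult_nonneg_nonneg zero_le_numeral zero_le_one zero_le_power)
  ultimately show ?case using Suc by (simp add: dbl_def frac_eq)
qed

lemma tauB_J: assumes "x \<in> J k" shows "tauB x = 2^(k+1) * x - 1"
proof -
  have x: "1/2^(k+1) \<le> x" "x < 1/2^k" using assms by (auto simp: J_def)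
  have L: "(LEAST n. (dbl ^^ n) x \<in> B) = k"
  proof (rule Least_equality)
    show "(dbl ^^ k) x \<in> B" using x by (simp add: dbl_pow_J[OF assms] B_def field_simps)
  next
    fix n assume n: "(dbl ^^ n) x \<in> B"
    show "k \<le> n"
    proof (rule ccontr)
      assume "\<not> k \<le> n"
      then have nk: "n < k" by simp
      then have "(2::real)^(n+1) \<le> 2^k" by (intro power_increasing) auto
      moreover have "(2::real)^k * x < 1" using x(2) by (simp add: field_simps)
      ultimately have "2^(n+1) * x < 1" using x
        by (smt (verit) mult_right_mono zero_le_divide_iff zero_le_power)
      then have "2^n * x < 1/2" by simp
      with n show False using dbl_pow_J[OF assms, of n] nk by (simp add: B_def)
    qed
  qed
  have "tauB x = dbl ((dbl ^^ k) x)" by (simp add: tauB_def phi_def L)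
  also have "\<dots> = frac (2^(k+1) * x)" by (simp add: dbl_pow_J[OF assms] dbl_def mult.assoc)
  also have "\<dots> = 2^(k+1) * x - 1"
  proof -
    have a: "1 \<le> 2^(k+1) * x" using x(1) by (simp add: field_simps)
    have b: "2^(k+1) * x < 2" using x(2) by (simp add: field_simps)
    have "\<lfloor>2^(k+1) * x\<rfloor> = 1" using a b by (intro floor_unique) auto
    then show ?thesis by (simp add: frac_def)
  qed
  finally show ?thesis .
qed

lemma tauB_range: "tauB x \<in> {0..<1}"
  by (simp add: tauB_def phi_def dbl_range del: atLeastLessThan_iff)

lemma cover: assumes "0 < x" "x < (1::real)" shows "\<exists>k. x \<in> J k"
proof -
  obtain m where m: "1/x < 2^m" using real_arch_pow[of 2 "1/x"] by auto
  then have P: "1/2^m \<le> x" using assms by (simp add: field_simps)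
  define m0 where "m0 = (LEAST m. 1/2^m \<le> x)"
  have m0: "1/2^m0 \<le> x" unfolding m0_def by (rule LeastI[where P="\<lambda>m. 1/2^m \<le> x", OF P])
  have "m0 \<noteq> 0" proof assume "m0 = 0" then show False using m0 assms by simp qed
  then obtain k where k: "m0 = Suc k" by (cases m0) auto
  have "\<not> 1/2^k \<le> x" using not_less_Least[of k "\<lambda>m. 1/2^m \<le> x"] k m0_def by simp
  then show ?thesis using m0 k by (auto simp: J_def)
qed

lemma affine_pre: assumes S: "S \<in> sets borel" and c: "c > (0::real)"
  shows "emeasure lborel ((\<lambda>x. c*x - 1) -` S) = ennreal (1/c) * emeasure lborel S"
proof -
  have g: "(\<lambda>x::real. -1 + c*x) \<in> borel_measurable borel" by measurable
  have "emeasure (density (distr lborel borel (\<lambda>x. -1 + c*x)) (\<lambda>_. ennreal \<bar>c\<bar>)) S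
      = ennreal c * emeasure lborel ((\<lambda>x. -1 + c*x) -` S)"
    using S c g by (simp add: emeasure_density_const emeasure_distr)
  then have e: "emeasure lborel S = ennreal c * emeasure lborel ((\<lambda>x. c*x - 1) -` S)"
    using lborel_real_affine[of c "-1"] c by simp
  have "ennreal (1/c) * emeasure lborel S = (ennreal (1/c) * ennreal c) * emeasure lborel ((\<lambda>x. c*x - 1) -` S)"
    by (simp add: e mult.assoc)
  also have "ennreal (1/c) * ennreal c = 1" using c by (simp flip: ennreal_mult)
  finally show ?thesis by simp
qed

lemma J_sub: "J k \<subseteq> {0..<1}"
proof
  fix x assume x: "x \<in> J k"
  have "(1::real)/2^k \<le> 1" by simp
  moreover have "(0::real) \<le> 1/2^(k+1)" by simp
  moreover have "1/2^(k+1) \<le> x" "x < 1/2^k" using x by (auto simp: J_def)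
  ultimately have "0 \<le> x" "x < 1" by linarith+
  then show "x \<in> {0..<1}" by simp
qed

lemma step:
  assumes S: "S \<in> sets borel" "S \<subseteq> {0..<1}"
  shows "{x\<in>{0..<1}. tauB x \<in> S} \<in> sets borel"
    and "emeasure lborel {x\<in>{0..<1}. tauB x \<in> S} \<le> emeasure lborel S"
proof -
  define g where "g k = (\<lambda>x::real. 2^(k+1)*x - 1)" for k :: nat
  define Z where "Z = (if tauB 0 \<in> S then {0::real} else {})"
  have eq: "{x\<in>{0..<1}. tauB x \<in> S} = Z \<union> (\<Union>k. J k \<inter> g k -` S)"
  proof (intro equalityI subsetI)
    fix x assume x: "x \<in> {x\<in>{0..<1}. tauB x \<in> S}"
    show "x \<in> Z \<union> (\<Union>k. J k \<inter> g k -` S)"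
    proof (cases "x = 0")
      case True then show ?thesis using x by (simp add: Z_def)
    next
      case False
      then obtain k where k: "x \<in> J k" using cover[of x] x by auto
      then show ?thesis using x tauB_J[OF k] by (auto simp: g_def)
    qed
  next
    fix x assume x: "x \<in> Z \<union> (\<Union>k. J k \<inter> g k -` S)"
    show "x \<in> {x\<in>{0..<1}. tauB x \<in> S}"
    proof (cases "x \<in> Z")
      case True then show ?thesis by (auto simp: Z_def split: if_splits)
    next
      case False
      then obtain k where k: "x \<in> J k" "g k x \<in> S" using x by auto
      then show ?thesis using k tauB_J[OF k(1)] J_sub[of k] by (auto simp: g_def)
    qed
  qed
  have gm: "g k -` S \<in> sets borel" for k
  proof -
    have "g k \<in> borel_measurable borel" unfolding g_def by measurable
    from measurable_sets[OF this S(1)] show ?thesis by simp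
  qed
  have Zm: "Z \<in> sets borel" by (simp add: Z_def)
  have Jm: "J k \<in> sets borel" for k by (simp add: J_def)
  show "{x\<in>{0..<1}. tauB x \<in> S} \<in> sets borel" unfolding eq using gm Zm Jm by auto
  have "emeasure lborel {x\<in>{0..<1}. tauB x \<in> S} \<le> emeasure lborel Z + emeasure lborel (\<Union>k. J k \<inter> g k -` S)"
    unfolding eq by (rule emeasure_subadditive) (use gm Zm Jm in auto)
  also have "emeasure lborel Z = 0" by (simp add: Z_def)
  also have "emeasure lborel (\<Union>k. J k \<inter> g k -` S) \<le> (\<Sum>k. emeasure lborel (J k \<inter> g k -` S))"
    by (rule emeasure_subadditive_countably) (use gm Jm in auto)
  also have "\<dots> \<le> (\<Sum>k. emeasure lborel (g k -` S))"
    by (intro suminf_le[OF _ summableI summableI] emeasure_mono) (use gm in auto)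
  also have "\<dots> = (\<Sum>k. ennreal (1/2^(k+1)) * emeasure lborel S)"
    using affine_pre[OF S(1)] by (simp add: g_def)
  also have "\<dots> = (\<Sum>k. ennreal (1/2^(k+1))) * emeasure lborel S" by simp
  also have "(\<Sum>k. ennreal (1/2^(k+1))) = 1"
  proof -
    have "(\<lambda>k. 1/2^(k+1) :: real) sums 1" using power_half_series by (simp add: power_one_over)
    then show ?thesis by (subst suminf_ennreal_eq) auto
  qed
  finally show "emeasure lborel {x\<in>{0..<1}. tauB x \<in> S} \<le> emeasure lborel S" by simp
qed

lemma iter:
  assumes A: "A \<in> sets borel"
  shows "{x\<in>{0..<1}. (tauB ^^ j) x \<in> A} \<in> sets borel \<and>
         emeasure lborel {x\<in>{0..<1}. (tauB ^^ j) x \<in> A} \<le> emeasure lborel (A \<inter> {0..<1})"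
proof (induction j)
  case 0
  have "{x\<in>{0..<1}. (tauB ^^ 0) x \<in> A} = A \<inter> {0..<1}" by auto
  then show ?case using A by auto
next
  case (Suc j)
  define S where "S = {x\<in>{0..<1}. (tauB ^^ j) x \<in> A}"
  have S: "S \<in> sets borel" "S \<subseteq> {0..<1}" using Suc unfolding S_def by auto
  have eq: "{x\<in>{0..<1}. (tauB ^^ Suc j) x \<in> A} = {x\<in>{0..<1}. tauB x \<in> S}"
    using tauB_range unfolding S_def funpow_Suc_right by auto
  have "emeasure lborel {x\<in>{0..<1}. tauB x \<in> S} \<le> emeasure lborel S" by (rule step(2)[OF S])
  also have "\<dots> \<le> emeasure lborel (A \<inter> {0..<1})" using Suc unfolding S_def by auto
  finally show ?case unfolding eq using step(1)[OF S] by auto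
qed

definition P :: "real \<Rightarrow> nat \<Rightarrow> real set" where
  "P t i = {x\<in>{0..<1}. (tauB ^^ (i - 1)) x \<in> {0<..1/t}}"

lemma P_sets: "P t i \<in> sets borel"
  using iter[of "{0<..1/t}" "i - 1"] unfolding P_def by auto

lemma P_emeasure: assumes "t > 0" shows "emeasure lborel (P t i) \<le> ennreal (1/t)"
proof -
  have "emeasure lborel (P t i) \<le> emeasure lborel ({0<..1/t} \<inter> {0..<1})"
    using iter[of "{0<..1/t}" "i - 1"] unfolding P_def by auto
  also have "\<dots> \<le> emeasure lborel {0<..1/t}" by (rule emeasure_mono) auto
  also have "\<dots> = ennreal (1/t)" using assms by simp
  finally show ?thesis .
qed

lemma P_measure: assumes "t > 0" shows "measure lborel (P t i) \<le> 1/t"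
proof -
  have "emeasure lborel (P t i) \<noteq> top" using P_emeasure[OF assms, of i]
    by (metis ennreal_neq_top neq_top_trans)
  then have "ennreal (measure lborel (P t i)) \<le> ennreal (1/t)"
    using P_emeasure[OF assms, of i] emeasure_eq_ennreal_measure by metis
  then show ?thesis using assms by (simp add: ennreal_le_iff)
qed

lemma beta_P: assumes "t > 0" "x \<in> {0..<1}" "real_of_int (beta i x) \<ge> t" shows "x \<in> P t i"
proof -
  define y where "y = (tauB ^^ (i - 1)) x"
  have c: "real_of_int \<lfloor>1/y\<rfloor> \<ge> t" using assms(3) by (simp add: beta_def chi_def y_def)
  have "y > 0"
  proof (rule ccontr)
    assume "\<not> y > 0"
    then have "1/y \<le> 0" by (simp add: divide_nonpos_nonneg)
    then have "real_of_int \<lfloor>1/y\<rfloor> \<le> 0" by linarith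
    then show False using c assms(1) by linarith
  qed
  moreover have "1/y \<ge> t" using c of_int_floor_le[of "1/y"] by linarith
  ultimately have "y \<le> 1/t" using assms(1) by (simp add: field_simps)
  then show ?thesis using \<open>y > 0\<close> assms(2) unfolding P_def y_def by auto
qed

theorem mainTheorem10:
  fixes \<psi> :: "nat \<Rightarrow> real"
  assumes pos: "\<forall>n\<ge>1. \<psi> n > 0"
    and summ: "summable (\<lambda>n. 1 / \<psi> (Suc n))"
  shows "AE x in lebesgue_on {0..<1}.
           \<not> (\<exists>\<^sub>\<infinity> n::nat. card {i \<in> {1..n}.
                real_of_int (beta i x) \<ge> real n * \<psi> (nat \<lfloor>ln (real n)\<rfloor>)} \<ge> 1)"
proof -
  define t where "t k = exp (real k) * \<psi> k" for k
  define N where "N k = nat \<lceil>exp (real k + 1)\<rceil>" for k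
  define G where "G n = (\<Union>i\<in>{1..N (Suc n)}. P (t (Suc n)) i)" for n
  have tpos: "t (Suc n) > 0" for n using pos by (simp add: t_def)
  have Gs: "G n \<in> sets lborel" for n unfolding G_def using P_sets by auto
  have Gsub: "G n \<subseteq> {0..<1}" for n unfolding G_def P_def by auto
  have Gfin: "emeasure lborel (G n) < \<infinity>" for n
  proof -
    have "emeasure lborel (G n) \<le> emeasure lborel {0..<1::real}" by (rule emeasure_mono[OF Gsub]) auto
    then show ?thesis by (simp add: le_less_trans)
  qed
  have Gm: "measure lborel (G n) \<le> (exp 1 + 1) * (1 / \<psi> (Suc n))" for n
  proof -
    have "measure lborel (G n) \<le> (\<Sum>i\<in>{1..N (Suc n)}. measure lborel (P (t (Suc n)) i))"
      unfolding G_def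
    proof (rule measure_subadditive_finite)
      show "(\<lambda>i. P (t (Suc n)) i) ` {1..N (Suc n)} \<subseteq> sets lborel" using P_sets by auto
      show "emeasure lborel (P (t (Suc n)) i) \<noteq> \<infinity>" for i
        using P_emeasure[OF tpos, of n i] by (metis ennreal_neq_top neq_top_trans infinity_ennreal_def)
    qed auto
    also have "\<dots> \<le> (\<Sum>i\<in>{1..N (Suc n)}. 1 / t (Suc n))" by (intro sum_mono P_measure tpos)
    also have "\<dots> = real (N (Suc n)) / t (Suc n)" by simp
    also have "\<dots> \<le> (exp 1 + 1) * (1 / \<psi> (Suc n))"
    proof -
      define e where "e = exp (real (Suc n))"
      have e1: "e \<ge> 1" unfolding e_def by simp
      have ps: "\<psi> (Suc n) > 0" using pos by simp
      have c0: "0 \<le> \<lceil>exp (real (Suc n) + 1)\<rceil>" using exp_gt_zero[of "real (Suc n) + 1"] by (simp del: exp_gt_zero)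
      have "real (N (Suc n)) = real_of_int \<lceil>exp (real (Suc n) + 1)\<rceil>" unfolding N_def using c0 by simp
      also have "\<dots> \<le> exp (real (Suc n) + 1) + 1" by (rule of_int_ceiling_le_add_one)
      also have "\<dots> = exp 1 * e + 1" unfolding e_def by (metis exp_add add.commute)
      also have "\<dots> \<le> exp 1 * e + e" using e1 by simp
      finally have "real (N (Suc n)) \<le> (exp 1 + 1) * e" by (simp add: algebra_simps)
      then have "real (N (Suc n)) / t (Suc n) \<le> (exp 1 + 1) * e / t (Suc n)"
        using tpos[of n] by (intro divide_right_mono) auto
      also have "\<dots> = (exp 1 + 1) * (1 / \<psi> (Suc n))"
        unfolding t_def e_def using ps by (simp add: field_simps)
      finally show ?thesis .
    qed
    finally show ?thesis .
  qed
  have summG: "summable (\<lambda>n. measure lborel (G n))"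
    by (rule summable_comparison_test'[where g="\<lambda>n. (exp 1 + 1) * (1 / \<psi> (Suc n))"])
       (use Gm summable_mult[OF summ] in auto)
  have AE1: "AE x in lborel. eventually (\<lambda>n. x \<in> space lborel - G n) sequentially"
    by (rule borel_cantelli_AE1[OF Gs Gfin summG])
  have AE2: "AE x in lebesgue. eventually (\<lambda>n. x \<in> space lborel - G n) sequentially"
    by (rule AE_completion[OF AE1])
  have main: "\<not> (\<exists>\<^sub>\<infinity> n::nat. card {i \<in> {1..n}.
                real_of_int (beta i x) \<ge> real n * \<psi> (nat \<lfloor>ln (real n)\<rfloor>)} \<ge> 1)"
    if x: "x \<in> {0..<1}" and ev: "eventually (\<lambda>n. x \<in> space lborel - G n) sequentially" for x
  proof
    obtain m where m: "\<And>n. n \<ge> m \<Longrightarrow> x \<notin> G n" using ev unfolding eventually_sequentially by auto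
    assume "\<exists>\<^sub>\<infinity> n::nat. card {i \<in> {1..n}.
                real_of_int (beta i x) \<ge> real n * \<psi> (nat \<lfloor>ln (real n)\<rfloor>)} \<ge> 1"
    then obtain n where n: "n > nat \<lceil>exp (real m + 1)\<rceil> + 3"
      and c: "card {i \<in> {1..n}. real_of_int (beta i x) \<ge> real n * \<psi> (nat \<lfloor>ln (real n)\<rfloor>)} \<ge> 1"
      unfolding INFM_nat by blast
    have "{i \<in> {1..n}. real_of_int (beta i x) \<ge> real n * \<psi> (nat \<lfloor>ln (real n)\<rfloor>)} \<noteq> {}"
      using c by (metis card.empty not_one_le_zero)
    then obtain i where i: "i \<in> {1..n}" "real_of_int (beta i x) \<ge> real n * \<psi> (nat \<lfloor>ln (real n)\<rfloor>)"
      by blast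
    define k where "k = nat \<lfloor>ln (real n)\<rfloor>"
    have n3: "real n \<ge> 3" using n by linarith
    have "exp 1 \<le> real n" using exp_le n3 by linarith
    then have ln1: "ln (real n) \<ge> 1" using n3 by (subst ln_ge_iff) auto
    then have k1: "k \<ge> 1" unfolding k_def by linarith
    have kle: "real k \<le> ln (real n)" unfolding k_def using ln1 by linarith
    have klt: "ln (real n) < real k + 1" unfolding k_def using ln1 by linarith
    have nexp: "exp (real k) \<le> real n" using kle n3 by (metis exp_le_cancel_iff exp_ln linorder_not_le order_less_le_trans zero_less_numeral)
    have nlt: "real n < exp (real k + 1)" using klt n3 by (metis exp_less_mono exp_ln order_less_le_trans zero_less_numeral)
    have nN: "n \<le> N k" unfolding N_def using nlt by linarith
    have psk: "\<psi> k > 0" using pos k1 by simp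
    have tk: "t k \<le> real n * \<psi> k" unfolding t_def using nexp psk by (simp add: mult_right_mono)
    have Sk: "Suc (k - 1) = k" using k1 by simp
    have tkpos: "t k > 0" using tpos[of "k - 1"] Sk by simp
    have "real_of_int (beta i x) \<ge> t k" using i(2) tk unfolding k_def by linarith
    then have "x \<in> P (t k) i" by (rule beta_P[OF tkpos x])
    then have "x \<in> G (k - 1)" unfolding G_def Sk using i(1) nN by auto
    then have "k \<le> m" using m[of "k - 1"] by linarith
    then have "exp (real k + 1) \<le> exp (real m + 1)" by simp
    then have "real n < exp (real m + 1)" using nlt by linarith
    then show False using n by linarith
  qed
  have S: "{0..<1::real} \<inter> space lebesgue \<in> sets lebesgue" by simp
  show ?thesis
    unfolding AE_restrict_space_iff[OF S]
    using AE2 by eventually_elim (use main in auto)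
qed

end
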